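(* The principle $\Diamond(\mathbb{N}^{\mathbb{N}}, =^\infty)$ implies $\mathfrak{a}_p = \aleph_1$.
   Context: For $f,g\in\mathbb{N}^{\mathbb{N}}$, $f =^\infty g$ means $\{n : f(n)=g(n)\}$ is infinite. A function $F : {}^{<\omega_1}2 \to \mathbb{N}^{\mathbb{N}}$ is Borel if for every $\delta<\omega_1$ its restriction to ${}^\delta 2$ is a Borel function. $\Diamond(\mathbb{N}^{\mathbb{N}},=^\infty)$ is the statement: for every Borel $F : {}^{<\omega_1}2\to\mathbb{N}^{\mathbb{N}}$ there is $G:\omega_1\to\mathbb{N}^{\mathbb{N}}$ such that for every $f:\omega_1\to 2$ the set $\{\delta<\omega_1 : F(f\upharpoonright\delta) =^\infty G(\delta)\}$ is stationary. A family $\mathcal{A}$ of permutations of $\mathbb{N}$ is almost disjoint if any two distinct members agree on only finitely many inputs; it is a maximal almost disjoint family of permutations if it is almost disjoint and not properly contained in another almost disjoint family of permutations. $\mathfrak{a}_p$ is the least cardinality of a maximal almost disjoint family of permutations. *)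

theory Defs
  imports "HOL-Analysis.Analysis"
begin

text \<open>omega_1 is represented by the canonical well-order cardSuc natLeq (the successor
cardinal of aleph_0, i.e. aleph_1), on the set Omega1 of its field.
(a, b) in omega1 means a \<le> b.\<close>

definition omega1 :: "nat set rel" where
  "omega1 = cardSuc natLeq"

definition Omega1 :: "nat set set" where
  "Omega1 = Field omega1"

definition olt :: "nat set \<Rightarrow> nat set \<Rightarrow> bool" where
  "olt a b \<longleftrightarrow> (a, b) \<in> omega1 \<and> a \<noteq> b"

definition club :: "nat set set \<Rightarrow> bool" where
  "club C \<longleftrightarrow> C \<subseteq> Omega1
     \<and> (\<forall>\<alpha>\<in>Omega1. \<exists>\<beta>\<in>C. olt \<alpha> \<beta>)
     \<and> (\<forall>\<delta>\<in>Omega1. (\<exists>\<alpha>. olt \<alpha> \<delta>) \<and> (\<forall>\<alpha>. olt \<alpha> \<delta> \<longrightarrow> (\<exists>\<beta>\<in>C. olt \<alpha> \<beta> \<and> olt \<beta> \<delta>))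
              \<longrightarrow> \<delta> \<in> C)"

definition stationary :: "nat set set \<Rightarrow> bool" where
  "stationary S \<longleftrightarrow> S \<subseteq> Omega1 \<and> (\<forall>C. club C \<longrightarrow> S \<inter> C \<noteq> {})"

text \<open>With the product topology (nat discrete) the subspace
seqs2 delta is the Cantor space 2^delta.\<close>

definition seqs2 :: "nat set \<Rightarrow> (nat set \<Rightarrow> nat) set" where
  "seqs2 \<delta> = (underS omega1 \<delta>) \<rightarrow>\<^sub>E {0::nat, 1}"

text \<open>A function F on the disjoint union of all 2^delta, delta < omega_1, is given in
curried form F delta s (s in 2^delta); it is Borel iff each restriction to 2^delta is
Borel measurable into Baire space nat \<Rightarrow> nat (product topology).\<close>

definition Borel_on_tree :: "(nat set \<Rightarrow> (nat set \<Rightarrow> nat) \<Rightarrow> (nat \<Rightarrow> nat)) \<Rightarrow> bool" where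
  "Borel_on_tree F \<longleftrightarrow>
     (\<forall>\<delta>\<in>Omega1. F \<delta> \<in> borel_measurable (restrict_space borel (seqs2 \<delta>)))"

definition eq_inf :: "(nat \<Rightarrow> nat) \<Rightarrow> (nat \<Rightarrow> nat) \<Rightarrow> bool" where
  "eq_inf f g \<longleftrightarrow> infinite {n. f n = g n}"

definition Diamond_Baire_eqinf :: bool where
  "Diamond_Baire_eqinf \<longleftrightarrow>
     (\<forall>F. Borel_on_tree F \<longrightarrow>
        (\<exists>G :: nat set \<Rightarrow> (nat \<Rightarrow> nat).
           \<forall>f \<in> Omega1 \<rightarrow> {0::nat, 1}.
             stationary {\<delta> \<in> Omega1. eq_inf (F \<delta> (restrict f (underS omega1 \<delta>))) (G \<delta>)}))"

definition ad_perms :: "(nat \<Rightarrow> nat) set \<Rightarrow> bool" where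
  "ad_perms A \<longleftrightarrow> (\<forall>p\<in>A. bij p) \<and> (\<forall>p\<in>A. \<forall>q\<in>A. p \<noteq> q \<longrightarrow> finite {n. p n = q n})"

definition mad_perms :: "(nat \<Rightarrow> nat) set \<Rightarrow> bool" where
  "mad_perms A \<longleftrightarrow> ad_perms A \<and> (\<forall>p. bij p \<and> p \<notin> A \<longrightarrow> \<not> ad_perms (insert p A))"

definition ap_eq_aleph1 :: bool where
  "ap_eq_aleph1 \<longleftrightarrow>
     (\<exists>A. mad_perms A \<and> (card_of A, cardSuc natLeq) \<in> ordIso)
     \<and> (\<forall>A. mad_perms A \<longrightarrow> (cardSuc natLeq, card_of A) \<in> ordLeq)"

end

theory Submission
  imports Defs "HOL-Library.Nat_Bijection"
begin
unbundle cardinal_syntax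


lemma proj_meas: "(\<lambda>s::'a \<Rightarrow> nat. s b) \<in> measurable (restrict_space borel X) (count_space UNIV)"
proof -
  have "continuous_on UNIV (\<lambda>s::'a \<Rightarrow> nat. s b)"
    by (rule continuous_on_product_then_coordinatewise[OF continuous_on_id])
  then have "(\<lambda>s::'a \<Rightarrow> nat. s b) \<in> borel_measurable borel"
    by (rule borel_measurable_continuous_onI)
  then have 1: "(\<lambda>s::'a \<Rightarrow> nat. s b) \<in> borel_measurable (restrict_space borel X)"
    by (rule measurable_restrict_space1)
  have "sets (borel::nat measure) = sets (count_space UNIV)"
    using sets_borel_eq_count_space by simp
  then have eq: "borel_measurable (restrict_space borel X) = (restrict_space borel X \<rightarrow>\<^sub>M (count_space UNIV::nat measure))"
    by (rule measurable_cong_sets[OF refl])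
  show ?thesis using 1 unfolding eq .
qed

lemma coord_meas:
  fixes f :: "'m \<Rightarrow> nat \<Rightarrow> nat"
  assumes m: "\<And>i. (\<lambda>x. f x i) \<in> measurable M (count_space UNIV)"
  shows "f \<in> borel_measurable M"
proof (rule borel_measurableI)
  fix S :: "(nat \<Rightarrow> nat) set" assume "open S"
  obtain K :: "(nat \<Rightarrow> nat) set set" where K: "topological_basis K" "countable K"
    "\<And>k. k\<in>K \<Longrightarrow> \<exists>X. (k = Pi\<^sub>E UNIV X) \<and> (\<forall>i. open (X i)) \<and> finite {i. X i \<noteq> UNIV}"
    using product_topology_countable_basis by blast
  obtain B where B: "B \<subseteq> K" "S = \<Union>B" using K(1) \<open>open S\<close> unfolding topological_basis_def by blast
  have "f -` S \<inter> space M = (\<Union>k\<in>B. f -` k \<inter> space M)" using B by auto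
  also have "\<dots> \<in> sets M"
  proof (rule sets.countable_UN')
    show "countable B" using B K(2) countable_subset by blast
    show "(\<lambda>k. f -` k \<inter> space M) ` B \<subseteq> sets M"
    proof clarify
      fix k assume "k \<in> B"
      then obtain X where X: "k = Pi\<^sub>E UNIV X" "finite {i. X i \<noteq> UNIV}" using K(3) B by blast
      have "f -` k \<inter> space M = {x \<in> space M. \<forall>i\<in>{i. X i \<noteq> UNIV}. f x i \<in> X i}"
        unfolding X(1) by (auto simp: PiE_def extensional_def Pi_def)
      also have "\<dots> \<in> sets M"
        using X(2) by (intro sets.sets_Collect_finite_All measurable_sets_Collect[OF m]) auto
      finally show "f -` k \<inter> space M \<in> sets M" .
    qed
  qed
  finally show "f -` S \<inter> space M \<in> sets M" .
qed



definition guessC :: "(nat \<Rightarrow> nat \<Rightarrow> nat) \<Rightarrow> nat list \<Rightarrow> nat \<Rightarrow> (nat \<times> nat) set \<Rightarrow> nat set" where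
  "guessC e L n R = {x. x < length L \<and> x \<notin> Domain R \<and> L!x \<notin> Range R \<and> (\<forall>j<n. e j x \<noteq> L!x)}"

definition gstep :: "(nat \<Rightarrow> nat \<Rightarrow> nat) \<Rightarrow> nat list \<Rightarrow> nat \<Rightarrow> (nat \<times> nat) set \<Rightarrow> (nat \<times> nat) set" where
  "gstep e L n R = (if guessC e L n R = {} then R
     else insert (Min (guessC e L n R), L ! Min (guessC e L n R)) R)"

definition fstep :: "(nat \<Rightarrow> nat \<Rightarrow> nat) \<Rightarrow> nat \<Rightarrow> (nat \<times> nat) set \<Rightarrow> (nat \<times> nat) set" where
  "fstep e n R = (if n \<in> Domain R then R else insert (n, LEAST y. y \<notin> Range R \<and> (\<forall>j\<le>n. e j n \<noteq> y)) R)"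

definition bstep :: "(nat \<Rightarrow> nat \<Rightarrow> nat) \<Rightarrow> nat \<Rightarrow> (nat \<times> nat) set \<Rightarrow> (nat \<times> nat) set" where
  "bstep e n R = (if n \<in> Range R then R else insert (LEAST x. x \<notin> Domain R \<and> (\<forall>j\<le>n. e j x \<noteq> n), n) R)"

definition stage :: "(nat \<Rightarrow> nat \<Rightarrow> nat) \<Rightarrow> (nat \<Rightarrow> nat) \<Rightarrow> nat \<Rightarrow> (nat \<times> nat) set \<Rightarrow> (nat \<times> nat) set" where
  "stage e g n R = bstep e n (fstep e n (gstep e (list_decode (g n)) n R))"

primrec Rs :: "(nat \<Rightarrow> nat \<Rightarrow> nat) \<Rightarrow> (nat \<Rightarrow> nat) \<Rightarrow> nat \<Rightarrow> (nat \<times> nat) set" where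
  "Rs e g 0 = {}"
| "Rs e g (Suc n) = stage e g n (Rs e g n)"

definition Gam :: "(nat \<Rightarrow> nat \<Rightarrow> nat) \<Rightarrow> (nat \<Rightarrow> nat) \<Rightarrow> (nat \<times> nat) set" where
  "Gam e g = (\<Union>n. Rs e g n)"

definition bld0 :: "(nat \<Rightarrow> nat \<Rightarrow> nat) \<Rightarrow> (nat \<Rightarrow> nat) \<Rightarrow> nat \<Rightarrow> nat" where
  "bld0 e g x = (SOME y. (x, y) \<in> Gam e g)"

definition pinj :: "(nat \<times> nat) set \<Rightarrow> bool" where
  "pinj R \<longleftrightarrow> (\<forall>a b c d. (a,b) \<in> R \<longrightarrow> (c,d) \<in> R \<longrightarrow> (a = c \<longleftrightarrow> b = d))"

lemma pinj_insert: "pinj R \<Longrightarrow> a \<notin> Domain R \<Longrightarrow> b \<notin> Range R \<Longrightarrow> pinj (insert (a,b) R)"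
  unfolding pinj_def by blast

lemma gstep_props:
  assumes "finite R" "pinj R"
  shows "finite (gstep e L n R)" "pinj (gstep e L n R)" "R \<subseteq> gstep e L n R"
    "card (gstep e L n R) \<le> card R + 1"
    "\<And>x y. (x,y) \<in> gstep e L n R \<Longrightarrow> (x,y) \<notin> R \<Longrightarrow> \<forall>j<n. e j x \<noteq> y"
proof -
  let ?C = "guessC e L n R"
  have fC: "finite ?C" unfolding guessC_def by auto
  have mem: "?C \<noteq> {} \<Longrightarrow> Min ?C \<in> ?C" using fC Min_in by blast
  show "finite (gstep e L n R)" using assms unfolding gstep_def by auto
  show "R \<subseteq> gstep e L n R" unfolding gstep_def by auto
  show "card (gstep e L n R) \<le> card R + 1" using assms unfolding gstep_def
    by (auto simp: card_insert_if)
  show "pinj (gstep e L n R)"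
  proof (cases "?C = {}")
    case True then show ?thesis using assms unfolding gstep_def by simp
  next
    case False
    then show ?thesis using mem assms unfolding gstep_def
      by (auto intro!: pinj_insert simp: guessC_def)
  qed
  show "\<And>x y. (x,y) \<in> gstep e L n R \<Longrightarrow> (x,y) \<notin> R \<Longrightarrow> \<forall>j<n. e j x \<noteq> y"
  proof -
    fix x y assume "(x,y) \<in> gstep e L n R" "(x,y) \<notin> R"
    then have "?C \<noteq> {}" "x = Min ?C" "y = L ! Min ?C" unfolding gstep_def by (auto split: if_splits)
    then show "\<forall>j<n. e j x \<noteq> y" using mem unfolding guessC_def by auto
  qed
qed

lemma fstep_props:
  assumes "finite R" "pinj R"
  shows "finite (fstep e n R)" "pinj (fstep e n R)" "R \<subseteq> fstep e n R"
    "card (fstep e n R) \<le> card R + 1" "n \<in> Domain (fstep e n R)"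
    "\<And>x y. (x,y) \<in> fstep e n R \<Longrightarrow> (x,y) \<notin> R \<Longrightarrow> \<forall>j\<le>n. e j x \<noteq> y"
proof -
  have "finite (Range R \<union> (\<lambda>j. e j n) ` {..n})" using assms by (simp add: finite_Range)
  then obtain y0 where "y0 \<notin> Range R \<union> (\<lambda>j. e j n) ` {..n}"
    using ex_new_if_finite[OF infinite_UNIV_nat] by blast
  then have ex: "\<exists>y. y \<notin> Range R \<and> (\<forall>j\<le>n. e j n \<noteq> y)" by auto
  let ?y = "LEAST y. y \<notin> Range R \<and> (\<forall>j\<le>n. e j n \<noteq> y)"
  have Y: "?y \<notin> Range R \<and> (\<forall>j\<le>n. e j n \<noteq> ?y)" using LeastI_ex[OF ex] .
  show "finite (fstep e n R)" using assms unfolding fstep_def by auto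
  show "R \<subseteq> fstep e n R" unfolding fstep_def by auto
  show "card (fstep e n R) \<le> card R + 1" using assms unfolding fstep_def
    by (auto simp: card_insert_if)
  show "n \<in> Domain (fstep e n R)" unfolding fstep_def by auto
  show "pinj (fstep e n R)" using assms Y unfolding fstep_def
    by (auto intro!: pinj_insert)
  show "\<And>x y. (x,y) \<in> fstep e n R \<Longrightarrow> (x,y) \<notin> R \<Longrightarrow> \<forall>j\<le>n. e j x \<noteq> y"
    using Y unfolding fstep_def by (auto split: if_splits)
qed

lemma bstep_props:
  assumes "finite R" "pinj R" "\<forall>j. inj (e j)"
  shows "finite (bstep e n R)" "pinj (bstep e n R)" "R \<subseteq> bstep e n R"
    "card (bstep e n R) \<le> card R + 1" "n \<in> Range (bstep e n R)"
    "\<And>x y. (x,y) \<in> bstep e n R \<Longrightarrow> (x,y) \<notin> R \<Longrightarrow> \<forall>j\<le>n. e j x \<noteq> y"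
proof -
  have "finite (e j -` {n})" for j using assms(3) by (simp add: finite_vimageI)
  then have "finite (Domain R \<union> (\<Union>j\<le>n. e j -` {n}))" using assms by (simp add: finite_Domain)
  then obtain x0 where "x0 \<notin> Domain R \<union> (\<Union>j\<le>n. e j -` {n})"
    using ex_new_if_finite[OF infinite_UNIV_nat] by blast
  then have ex: "\<exists>x. x \<notin> Domain R \<and> (\<forall>j\<le>n. e j x \<noteq> n)" by auto
  let ?x = "LEAST x. x \<notin> Domain R \<and> (\<forall>j\<le>n. e j x \<noteq> n)"
  have X: "?x \<notin> Domain R \<and> (\<forall>j\<le>n. e j ?x \<noteq> n)" using LeastI_ex[OF ex] .
  show "finite (bstep e n R)" using assms unfolding bstep_def by auto
  show "R \<subseteq> bstep e n R" unfolding bstep_def by auto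
  show "card (bstep e n R) \<le> card R + 1" using assms unfolding bstep_def
    by (auto simp: card_insert_if)
  show "n \<in> Range (bstep e n R)" unfolding bstep_def by auto
  show "pinj (bstep e n R)" using assms X unfolding bstep_def
    by (auto intro!: pinj_insert)
  show "\<And>x y. (x,y) \<in> bstep e n R \<Longrightarrow> (x,y) \<notin> R \<Longrightarrow> \<forall>j\<le>n. e j x \<noteq> y"
    using X unfolding bstep_def by (auto split: if_splits)
qed

lemma stage_props:
  assumes "finite R" "pinj R" "\<forall>j. inj (e j)"
  shows "finite (stage e g n R)" "pinj (stage e g n R)" "R \<subseteq> stage e g n R"
    "card (stage e g n R) \<le> card R + 3" "n \<in> Domain (stage e g n R)" "n \<in> Range (stage e g n R)"
    "\<And>x y. (x,y) \<in> stage e g n R \<Longrightarrow> (x,y) \<notin> R \<Longrightarrow> \<forall>j<n. e j x \<noteq> y"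
    "gstep e (list_decode (g n)) n R \<subseteq> stage e g n R"
proof -
  let ?R1 = "gstep e (list_decode (g n)) n R"
  let ?R2 = "fstep e n ?R1"
  note G = gstep_props[OF assms(1,2), where e=e and L="list_decode (g n)" and n=n]
  note F = fstep_props[OF G(1,2), where e=e and n=n]
  note B = bstep_props[OF F(1,2) assms(3), where n=n]
  show "finite (stage e g n R)" "pinj (stage e g n R)" using B unfolding stage_def by auto
  show "R \<subseteq> stage e g n R" "?R1 \<subseteq> stage e g n R" using G(3) F(3) B(3) unfolding stage_def by auto
  show "card (stage e g n R) \<le> card R + 3" using G(4) F(4) B(4) unfolding stage_def by auto
  show "n \<in> Range (stage e g n R)" using B(5) unfolding stage_def by auto
  show "n \<in> Domain (stage e g n R)" using F(5) B(3) unfolding stage_def by auto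
  show "\<And>x y. (x,y) \<in> stage e g n R \<Longrightarrow> (x,y) \<notin> R \<Longrightarrow> \<forall>j<n. e j x \<noteq> y"
  proof -
    fix x y assume a: "(x,y) \<in> stage e g n R" "(x,y) \<notin> R"
    show "\<forall>j<n. e j x \<noteq> y"
    proof (cases "(x,y) \<in> ?R1")
      case True then show ?thesis using G(5) a by blast
    next
      case n1: False
      show ?thesis
      proof (cases "(x,y) \<in> ?R2")
        case True then show ?thesis using F(6) n1 by auto
      next
        case False then show ?thesis using B(6) a unfolding stage_def by auto
      qed
    qed
  qed
qed

lemma Rs_props:
  assumes "\<forall>j. inj (e j)"
  shows "finite (Rs e g n) \<and> pinj (Rs e g n) \<and> card (Rs e g n) \<le> 3 * n"
proof (induction n)
  case 0 then show ?case by (simp add: pinj_def)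
next
  case (Suc n)
  then show ?case using stage_props[OF _ _ assms, where R="Rs e g n" and g=g and n=n] by auto
qed

lemma Rs_Suc_sub: assumes "\<forall>j. inj (e j)" shows "Rs e g n \<subseteq> Rs e g (Suc n)"
  using Rs_props[OF assms] stage_props(3)[OF _ _ assms] by auto

lemma Rs_mono: assumes "\<forall>j. inj (e j)" "n \<le> m" shows "Rs e g n \<subseteq> Rs e g m"
  using assms(2)
proof (induction m)
  case 0 then show ?case by simp
next
  case (Suc m)
  show ?case
  proof (cases "n = Suc m")
    case False
    then have "n \<le> m" using Suc.prems by simp
    then show ?thesis using Suc.IH Rs_Suc_sub[OF assms(1), where g=g and n=m] by blast
  qed simp
qed

lemma Rs_dom_ran: assumes "\<forall>j. inj (e j)"
  shows "n \<in> Domain (Rs e g (Suc n))" "n \<in> Range (Rs e g (Suc n))"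
  using Rs_props[OF assms] stage_props(5,6)[OF _ _ assms] by auto

lemma Gam_pinj: assumes "\<forall>j. inj (e j)" shows "pinj (Gam e g)"
  unfolding pinj_def Gam_def
proof (clarify)
  fix a b c d n m assume "(a,b) \<in> Rs e g n" "(c,d) \<in> Rs e g m"
  then have "(a,b) \<in> Rs e g (max n m)" "(c,d) \<in> Rs e g (max n m)"
    using Rs_mono[OF assms] by (meson max.cobounded1 max.cobounded2 subsetD)+
  then show "(a = c) = (b = d)" using Rs_props[OF assms] unfolding pinj_def by blast
qed

lemma bld0_in: assumes "\<forall>j. inj (e j)" shows "(x, bld0 e g x) \<in> Gam e g"
proof -
  have "x \<in> Domain (Gam e g)" using Rs_dom_ran(1)[OF assms] unfolding Gam_def by blast
  then show ?thesis unfolding bld0_def by (meson DomainE someI)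
qed

lemma bld0_eq: assumes "\<forall>j. inj (e j)" "(x,y) \<in> Gam e g" shows "bld0 e g x = y"
  using Gam_pinj[OF assms(1)] bld0_in[OF assms(1), where x=x and g=g] assms(2) unfolding pinj_def by blast

lemma bld0_bij: assumes "\<forall>j. inj (e j)" shows "bij (bld0 e g)"
proof (rule bijI)
  show "inj (bld0 e g)"
  proof (rule injI)
    fix x x' assume "bld0 e g x = bld0 e g x'"
    then show "x = x'" using bld0_in[OF assms, where x=x and g=g] bld0_in[OF assms, where x=x' and g=g] Gam_pinj[OF assms]
      unfolding pinj_def by metis
  qed
  show "surj (bld0 e g)"
  proof (rule surjI)
    fix y
    have "y \<in> Range (Gam e g)" using Rs_dom_ran(2)[OF assms] unfolding Gam_def by blast
    then obtain x where "(x,y) \<in> Gam e g" by blast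
    then show "bld0 e g (SOME x. (x,y) \<in> Gam e g) = y"
      by (metis assms bld0_eq someI)
  qed
qed

lemma Rs_origin: assumes "\<forall>j. inj (e j)"
  shows "(x,y) \<in> Rs e g m \<Longrightarrow> \<exists>n<m. (x,y) \<in> Rs e g (Suc n) \<and> (\<forall>j<n. e j x \<noteq> y)"
proof (induction m)
  case 0 then show ?case by simp
next
  case (Suc m)
  show ?case
  proof (cases "(x,y) \<in> Rs e g m")
    case True then show ?thesis using Suc.IH less_SucI by blast
  next
    case False
    then show ?thesis using Suc.prems stage_props(7)[OF _ _ assms, where R="Rs e g m" and g=g and n=m and x=x and y=y] Rs_props[OF assms, where g=g and n=m]
      by auto
  qed
qed

lemma bld0_ad: assumes "\<forall>j. inj (e j)" shows "finite {x. bld0 e g x = e j x}"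
proof (rule finite_subset)
  show "finite (Domain (Rs e g (Suc j)))" using Rs_props[OF assms, where g=g and n="Suc j"] finite_Domain by blast
  show "{x. bld0 e g x = e j x} \<subseteq> Domain (Rs e g (Suc j))"
  proof
    fix x assume "x \<in> {x. bld0 e g x = e j x}"
    then have "(x, e j x) \<in> Gam e g" using bld0_in[OF assms, where x=x and g=g] by simp
    then obtain m where "(x, e j x) \<in> Rs e g m" unfolding Gam_def by blast
    then obtain n where "(x, e j x) \<in> Rs e g (Suc n)" "\<forall>j'<n. e j' x \<noteq> e j x"
      using Rs_origin[OF assms] by blast
    then have "n \<le> j" "(x, e j x) \<in> Rs e g (Suc n)" using leI by blast+
    then show "x \<in> Domain (Rs e g (Suc j))" using Rs_mono[OF assms, where n="Suc n" and m="Suc j" and g=g] by auto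
  qed
qed

lemma guess_hit:
  assumes inje: "\<forall>j. inj (e j)" and q: "inj q"
    and gn: "list_decode (g n) = map q [0..<K]" and K: "K \<ge> 7*n+8+M"
    and M: "\<And>j x. j < n \<Longrightarrow> x \<ge> M \<Longrightarrow> q x \<noteq> e j x"
  shows "\<exists>x. x \<notin> Domain (Rs e g n) \<and> (x, q x) \<in> Rs e g (Suc n)"
proof -
  let ?R = "Rs e g n" let ?L = "list_decode (g n)"
  have R: "finite ?R" "card ?R \<le> 3*n" using Rs_props[OF inje] by auto
  have cD: "card (Domain ?R) \<le> 3*n" using R card_image_le[of ?R fst] by (simp add: fst_eq_Domain)
  have cR: "card (Range ?R) \<le> 3*n" using R card_image_le[of ?R snd] by (simp add: snd_eq_Range)
  have fR: "finite (Range ?R)" using R by (simp add: finite_Range)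
  have cV: "card (q -` Range ?R) \<le> 3*n"
  proof -
    have "card (q -` Range ?R) = card (q ` (q -` Range ?R))"
      by (rule card_image[symmetric], rule inj_on_subset[OF q], simp)
    also have "\<dots> \<le> card (Range ?R)" using fR by (intro card_mono) auto
    finally show ?thesis using cR by linarith
  qed
  let ?Z = "{M..<K} - (Domain ?R \<union> q -` Range ?R)"
  have "card {M..<K} \<le> card ?Z + card (Domain ?R \<union> q -` Range ?R)"
  proof -
    have "{M..<K} \<subseteq> ?Z \<union> (Domain ?R \<union> q -` Range ?R)" by auto
    then have "card {M..<K} \<le> card (?Z \<union> (Domain ?R \<union> q -` Range ?R))"
      using R fR q by (intro card_mono) (auto simp: finite_Domain finite_vimageI)
    also have "\<dots> \<le> card ?Z + card (Domain ?R \<union> q -` Range ?R)" by (rule card_Un_le)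
    finally show ?thesis .
  qed
  moreover have "card (Domain ?R \<union> q -` Range ?R) \<le> 6*n"
    using card_Un_le[of "Domain ?R" "q -` Range ?R"] cD cV by linarith
  moreover have "card {M..<K} \<ge> 7*n+8" using K by simp
  ultimately have "card ?Z > 0" by linarith
  then obtain x where x: "x \<in> ?Z" by (metis card_gt_0_iff ex_in_conv)
  have xM: "\<forall>j<n. e j x \<noteq> q x" using M x by (metis DiffD1 atLeastLessThan_iff)
  have "x \<in> guessC e ?L n ?R" using x gn xM unfolding guessC_def by auto
  then have C: "guessC e ?L n ?R \<noteq> {}" by blast
  have fC: "finite (guessC e ?L n ?R)" unfolding guessC_def by auto
  let ?m = "Min (guessC e ?L n ?R)"
  have m: "?m \<in> guessC e ?L n ?R" using C fC Min_in by blast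
  then have "?m < K" "?m \<notin> Domain ?R" "?L ! ?m = q ?m" using gn unfolding guessC_def by auto
  moreover have "(?m, ?L ! ?m) \<in> gstep e ?L n ?R" using C unfolding gstep_def by simp
  ultimately show ?thesis using stage_props(8)[OF R(1) _ inje, where g=g and n=n] Rs_props[OF inje] by auto
qed

lemma bld0_meet:
  assumes inje: "\<forall>j. inj (e j)" and q: "inj q"
    and inf: "infinite {n. \<exists>K M. list_decode (g n) = map q [0..<K] \<and> K \<ge> 7*n+8+M \<and>
                 (\<forall>j x. j < n \<longrightarrow> x \<ge> M \<longrightarrow> q x \<noteq> e j x)}" (is "infinite ?N")
  shows "infinite {x. bld0 e g x = q x}"
proof -
  have "\<forall>n\<in>?N. \<exists>x. x \<notin> Domain (Rs e g n) \<and> (x, q x) \<in> Rs e g (Suc n)"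
    using guess_hit[OF inje q] by blast
  then have "\<exists>h. \<forall>n\<in>?N. h n \<notin> Domain (Rs e g n) \<and> (h n, q (h n)) \<in> Rs e g (Suc n)"
    by (rule bchoice)
  then obtain h where h0: "\<forall>n\<in>?N. h n \<notin> Domain (Rs e g n) \<and> (h n, q (h n)) \<in> Rs e g (Suc n)"
    by blast
  have h: "n \<in> ?N \<Longrightarrow> h n \<notin> Domain (Rs e g n) \<and> (h n, q (h n)) \<in> Rs e g (Suc n)" for n
    using h0 by blast
  have "inj_on h ?N"
  proof (rule inj_onI)
    fix a b assume ab: "a \<in> ?N" "b \<in> ?N" "h a = h b"
    show "a = b"
    proof (rule ccontr)
      assume "a \<noteq> b"
      then consider "a < b" | "b < a" by linarith
      then show False
      proof cases
        case 1
        then have "Rs e g (Suc a) \<subseteq> Rs e g b" using Rs_mono[OF inje Suc_leI, where g=g] by blast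
        then show False using h[OF ab(1)] h[OF ab(2)] ab(3) by (metis DomainI subsetD)
      next
        case 2
        then have "Rs e g (Suc b) \<subseteq> Rs e g a" using Rs_mono[OF inje Suc_leI, where g=g] by blast
        then show False using h[OF ab(1)] h[OF ab(2)] ab(3) by (metis DomainI subsetD)
      qed
    qed
  qed
  then have "infinite (h ` ?N)" using inf finite_imageD by blast
  moreover have "h ` ?N \<subseteq> {x. bld0 e g x = q x}"
  proof
    fix x assume "x \<in> h ` ?N"
    then obtain n where "n \<in> ?N" "x = h n" by blast
    then have "(x, q x) \<in> Gam e g" using h unfolding Gam_def by blast
    then show "x \<in> {x. bld0 e g x = q x}" using bld0_eq[OF inje] by simp
  qed
  ultimately show ?thesis using finite_subset by blast
qed



lemma CO: "Card_order omega1"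
  unfolding omega1_def by (rule cardSuc_Card_order[OF natLeq_Card_order])

lemma WO: "Well_order omega1"
  using CO card_order_on_well_order_on by blast

lemma worel: "wo_rel omega1" using WO unfolding wo_rel_def .

lemma countable_card_le_natLeq: "countable A \<longleftrightarrow> |A| \<le>o natLeq"
proof -
  have 1: "countable A \<longleftrightarrow> |A| \<le>o |UNIV::nat set|"
    unfolding countable_def using card_of_ordLeq[of A "UNIV::nat set"] by auto
  show ?thesis
  proof
    assume "countable A"
    then show "|A| \<le>o natLeq" using 1 card_of_nat ordLeq_ordIso_trans by blast
  next
    assume "|A| \<le>o natLeq"
    then show "countable A" using 1 card_of_nat ordIso_symmetric ordLeq_ordIso_trans by blast
  qed
qed

lemma omega1_card: "|Omega1| =o cardSuc natLeq"
  unfolding Omega1_def using card_of_Field_ordIso[OF CO] unfolding omega1_def .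

lemma count_underS: assumes "\<delta> \<in> Omega1" shows "countable (underS omega1 \<delta>)"
proof -
  have "|underS omega1 \<delta>| <o cardSuc natLeq"
    using card_of_underS[OF CO, of \<delta>] assms unfolding Omega1_def omega1_def by simp
  moreover have "|underS omega1 \<delta>| \<le>o natLeq"
  proof (rule ccontr)
    assume "\<not> |underS omega1 \<delta>| \<le>o natLeq"
    then have "natLeq <o |underS omega1 \<delta>|"
      using not_ordLeq_iff_ordLess natLeq_Well_order card_of_Well_order by blast
    then have "cardSuc natLeq \<le>o |underS omega1 \<delta>|"
      using cardSuc_ordLess_ordLeq[OF natLeq_Card_order card_of_Card_order] by blast
    with \<open>|underS omega1 \<delta>| <o cardSuc natLeq\<close> show False using not_ordLess_ordLeq by blast
  qed
  then show ?thesis using countable_card_le_natLeq by blast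
qed

lemma olt_Field: "olt a b \<Longrightarrow> a \<in> Omega1 \<and> b \<in> Omega1"
  unfolding olt_def Omega1_def by (auto intro: FieldI1 FieldI2)

lemma olt_underS: "olt a b \<longleftrightarrow> a \<in> underS omega1 b"
  unfolding olt_def underS_def by auto

lemma olt_trans: assumes "olt a b" "olt b c" shows "olt a c"
proof -
  have ab: "(a,b) \<in> omega1" "a \<noteq> b" and bc: "(b,c) \<in> omega1" "b \<noteq> c"
    using assms unfolding olt_def by auto
  have "(a,c) \<in> omega1" using wo_rel.TRANS[OF worel] ab(1) bc(1) by (rule transD)
  moreover have "a \<noteq> c"
  proof
    assume "a = c"
    then have "(b,a) \<in> omega1" using bc by simp
    then show False using antisymD[OF wo_rel.ANTISYM[OF worel] ab(1)] ab(2) by blast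
  qed
  ultimately show ?thesis unfolding olt_def by simp
qed

lemma olt_irrefl: "\<not> olt a a" unfolding olt_def by simp

lemma olt_asym: "olt a b \<Longrightarrow> \<not> olt b a"
  using olt_trans olt_irrefl by blast

lemma olt_total: "a \<in> Omega1 \<Longrightarrow> b \<in> Omega1 \<Longrightarrow> a \<noteq> b \<Longrightarrow> olt a b \<or> olt b a"
  using wo_rel.TOTALS[OF worel] unfolding olt_def Omega1_def by blast

lemma uncount: "\<not> countable Omega1"
proof
  assume "countable Omega1"
  then have "|Omega1| \<le>o natLeq" using countable_card_le_natLeq by blast
  moreover have "natLeq <o |Omega1|"
    using cardSuc_greater[OF natLeq_Card_order] omega1_card
    by (meson ordIso_symmetric ordLess_ordIso_trans)
  ultimately show False using not_ordLess_ordLeq by blast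
qed

lemma bounded: assumes "countable X" "X \<subseteq> Omega1" shows "\<exists>\<gamma>\<in>Omega1. \<forall>x\<in>X. olt x \<gamma>"
proof -
  let ?Y = "\<Union>x\<in>X. insert x (underS omega1 x)"
  have "countable ?Y" using assms count_underS by auto
  then have "\<not> Omega1 \<subseteq> ?Y" using uncount countable_subset by blast
  then obtain \<gamma> where g: "\<gamma> \<in> Omega1" "\<gamma> \<notin> ?Y" by blast
  have "olt x \<gamma>" if "x \<in> X" for x
  proof -
    have "x \<noteq> \<gamma>" "\<not> olt \<gamma> x" using g that olt_underS by auto
    then show ?thesis using olt_total g assms(2) that by blast
  qed
  then show ?thesis using g by blast
qed

lemma minimal: assumes "y \<in> Y" shows "\<exists>m\<in>Y. \<forall>z\<in>Y. \<not> olt z m"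
proof -
  have "wf (omega1 - Id)" using wo_rel.WF[OF worel] .
  then obtain m where "m \<in> Y" "\<forall>z. (z, m) \<in> omega1 - Id \<longrightarrow> z \<notin> Y"
    using assms wfE_min by metis
  then show ?thesis unfolding olt_def by auto
qed

lemma olt_wf_induct: "(\<And>x. (\<And>y. olt y x \<Longrightarrow> P y) \<Longrightarrow> P x) \<Longrightarrow> P a"
proof -
  assume H: "\<And>x. (\<And>y. olt y x \<Longrightarrow> P y) \<Longrightarrow> P x"
  have "wf (omega1 - Id)" using wo_rel.WF[OF worel] .
  then show "P a"
    using wf_induct[of "omega1 - Id" P a] H unfolding olt_def by blast
qed



definition bfix :: "(nat \<Rightarrow> nat \<Rightarrow> nat) \<Rightarrow> nat \<Rightarrow> nat \<Rightarrow> nat" where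
  "bfix e j = (if bij (e j) then e j else id)"

definition bld :: "(nat \<Rightarrow> nat \<Rightarrow> nat) \<Rightarrow> (nat \<Rightarrow> nat) \<Rightarrow> nat \<Rightarrow> nat" where
  "bld e g = bld0 (bfix e) g"

lemma bfix_inj: "\<forall>j. inj (bfix e j)"
  unfolding bfix_def by (auto simp: bij_is_inj)

lemma bld_bij: "bij (bld e g)"
  unfolding bld_def using bld0_bij[OF bfix_inj] .

lemma bld_ad: assumes "bij (e j)" shows "finite {x. bld e g x = e j x}"
proof -
  have "bfix e j = e j" using assms by (simp add: bfix_def)
  then show ?thesis unfolding bld_def using bld0_ad[OF bfix_inj[of e], where j=j and g=g] by simp
qed

lemma bld_meet:
  assumes "\<forall>j. bij (e j)" "inj q"
    "infinite {n. \<exists>K M. list_decode (g n) = map q [0..<K] \<and> K \<ge> 7*n+8+M \<and>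
                 (\<forall>j x. j < n \<longrightarrow> x \<ge> M \<longrightarrow> q x \<noteq> e j x)}"
  shows "infinite {x. bld e g x = q x}"
proof -
  have "bfix e = e" using assms(1) unfolding bfix_def by auto
  then show ?thesis unfolding bld_def using bld0_meet[OF bfix_inj[of e] assms(2), where g=g] assms(3) by simp
qed

lemma ad_sym: "finite {n. p n = q n} \<longleftrightarrow> finite {n. q n = p n}"
  by (simp add: eq_commute)

lemma countable_not_mad:
  assumes "ad_perms A" "countable A"
  shows "\<exists>p. bij p \<and> p \<notin> A \<and> ad_perms (insert p A)"
proof -
  define e where "e = (\<lambda>j. if A = {} then id else from_nat_into A j)"
  define p where "p = bld e (\<lambda>_. 0)"
  have eA: "a \<in> A \<Longrightarrow> \<exists>j. e j = a" for a
    unfolding e_def using from_nat_into_surj[OF assms(2)] by auto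
  have ebij: "bij (e j)" for j
    unfolding e_def using from_nat_into[of A j] assms(1) unfolding ad_perms_def by auto
  have fin: "a \<in> A \<Longrightarrow> finite {x. p x = a x}" for a
  proof -
    assume "a \<in> A"
    then obtain j where "e j = a" using eA by blast
    then show ?thesis using bld_ad[where e=e and j=j and g="\<lambda>_. 0", OF ebij] unfolding p_def by simp
  qed
  have pA: "p \<notin> A"
  proof
    assume "p \<in> A"
    then have "finite {x. p x = p x}" using fin by blast
    then show False by simp
  qed
  have "ad_perms (insert p A)"
    using assms(1) fin ad_sym[of p] bld_bij unfolding ad_perms_def p_def by (auto simp: p_def)
  then show ?thesis using pA bld_bij unfolding p_def by blast
qed

lemma mad_uncountable_card:
  assumes "mad_perms A" shows "cardSuc natLeq \<le>o |A|"
proof (rule ccontr)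
  assume "\<not> cardSuc natLeq \<le>o |A|"
  then have "\<not> natLeq <o |A|"
    using cardSuc_ordLess_ordLeq[OF natLeq_Card_order card_of_Card_order] by blast
  then have "|A| \<le>o natLeq"
    using not_ordLeq_iff_ordLess natLeq_Well_order card_of_Well_order by blast
  then have "countable A" using countable_card_le_natLeq by blast
  then show False using countable_not_mad assms unfolding mad_perms_def by blast
qed

definition enum :: "(nat set \<Rightarrow> nat \<Rightarrow> nat) \<Rightarrow> nat set \<Rightarrow> nat \<Rightarrow> nat \<Rightarrow> nat" where
  "enum p \<delta> j = (if underS omega1 \<delta> = {} then id else p (from_nat_into (underS omega1 \<delta>) j))"

definition famH :: "(nat set \<Rightarrow> nat \<Rightarrow> nat) \<Rightarrow> (nat set \<Rightarrow> nat \<Rightarrow> nat) \<Rightarrow> nat set \<Rightarrow> nat \<Rightarrow> nat" where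
  "famH G p \<delta> = bld (enum p \<delta>) (G \<delta>)"

definition fam :: "(nat set \<Rightarrow> nat \<Rightarrow> nat) \<Rightarrow> nat set \<Rightarrow> nat \<Rightarrow> nat" where
  "fam G = wo_rel.worec omega1 (famH G)"

lemma fam_eq: "fam G \<delta> = bld (enum (fam G) \<delta>) (G \<delta>)"
proof -
  have "wo_rel.adm_wo omega1 (famH G)"
    unfolding wo_rel.adm_wo_def[OF worel]
  proof (intro allI impI)
    fix f g :: "nat set \<Rightarrow> nat \<Rightarrow> nat" and x
    assume a: "\<forall>y\<in>underS omega1 x. f y = g y"
    have "enum f x = enum g x"
    proof
      fix j show "enum f x j = enum g x j"
      proof (cases "underS omega1 x = {}")
        case False
        then have "from_nat_into (underS omega1 x) j \<in> underS omega1 x" by (rule from_nat_into)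
        then show ?thesis using a False by (simp add: enum_def)
      qed (simp add: enum_def)
    qed
    then show "famH G f x = famH G g x" unfolding famH_def by simp
  qed
  then have "fam G = famH G (fam G)" unfolding fam_def by (rule wo_rel.worec_fixpoint[OF worel])
  then show ?thesis unfolding famH_def by (metis)
qed

lemma fam_bij: "bij (fam G \<delta>)"
  using fam_eq bld_bij by metis

lemma enum_surj: assumes "\<delta> \<in> Omega1" "olt \<alpha> \<delta>" shows "\<exists>j. enum p \<delta> j = p \<alpha>"
proof -
  have "\<alpha> \<in> underS omega1 \<delta>" using assms olt_underS by blast
  then show ?thesis unfolding enum_def using from_nat_into_surj[OF count_underS[OF assms(1)]]
    by (metis empty_iff)
qed

lemma enum_bij: "bij (enum (fam G) \<delta> j)"
  unfolding enum_def using fam_bij by auto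

lemma fam_ad: assumes "\<delta> \<in> Omega1" "olt \<alpha> \<delta>" shows "finite {x. fam G \<delta> x = fam G \<alpha> x}"
proof -
  obtain j where j: "enum (fam G) \<delta> j = fam G \<alpha>" using enum_surj[OF assms] by blast
  show ?thesis using bld_ad[where e="enum (fam G) \<delta>" and g="G \<delta>" and j=j, OF enum_bij] j fam_eq[of G \<delta>] by simp
qed

lemma fam_inj: "inj_on (fam G) Omega1"
proof (rule inj_onI)
  fix a b assume ab: "a \<in> Omega1" "b \<in> Omega1" "fam G a = fam G b"
  show "a = b"
  proof (rule ccontr)
    assume "a \<noteq> b"
    then have "olt a b \<or> olt b a" using olt_total ab by blast
    then have "finite {x. fam G b x = fam G a x} \<or> finite {x. fam G a x = fam G b x}"
      using fam_ad ab by blast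
    then show False using ab(3) by simp
  qed
qed

lemma fam_ad_perms: "ad_perms (fam G ` Omega1)"
  unfolding ad_perms_def
proof (intro conjI ballI impI)
  fix p assume "p \<in> fam G ` Omega1" then show "bij p" using fam_bij by auto
next
  fix p q assume "p \<in> fam G ` Omega1" "q \<in> fam G ` Omega1" "p \<noteq> q"
  then obtain a b where ab: "a \<in> Omega1" "b \<in> Omega1" "p = fam G a" "q = fam G b" "a \<noteq> b" by blast
  then have "olt a b \<or> olt b a" using olt_total by blast
  then show "finite {n. p n = q n}" using fam_ad ab ad_sym by blast
qed

lemma fam_card: "|fam G ` Omega1| =o cardSuc natLeq"
proof -
  have "bij_betw (fam G) Omega1 (fam G ` Omega1)" using fam_inj by (rule inj_on_imp_bij_betw)
  then have "|Omega1| =o |fam G ` Omega1|" using card_of_ordIso by blast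
  then have "|fam G ` Omega1| =o |Omega1|" using ordIso_symmetric by blast
  then show ?thesis using omega1_card ordIso_transitive by blast
qed



definition posf :: "nat set \<times> nat \<Rightarrow> nat set" where
  "posf = (SOME f. inj_on f (Omega1 \<times> (UNIV::nat set)) \<and> f ` (Omega1 \<times> UNIV) \<subseteq> Omega1)"

lemma posf: "inj_on posf (Omega1 \<times> (UNIV::nat set)) \<and> posf ` (Omega1 \<times> UNIV) \<subseteq> Omega1"
proof -
  have inf: "\<not> finite Omega1" using uncount countable_finite by blast
  have "natLeq \<le>o |Omega1|" using inf infinite_iff_natLeq_ordLeq by blast
  then have "|UNIV::nat set| \<le>o |Omega1|" using card_of_nat ordIso_ordLeq_trans by blast
  then have "|Omega1 \<times> (UNIV::nat set)| =o |Omega1|"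
    using card_of_Times_infinite[OF inf, of "UNIV::nat set"] by simp
  then have "|Omega1 \<times> (UNIV::nat set)| \<le>o |Omega1|" using ordIso_iff_ordLeq by blast
  then have "\<exists>f. inj_on f (Omega1 \<times> (UNIV::nat set)) \<and> f ` (Omega1 \<times> UNIV) \<subseteq> Omega1"
    using card_of_ordLeq by blast
  then show ?thesis unfolding posf_def by (rule someI_ex)
qed

lemma posf_in: "\<beta> \<in> Omega1 \<Longrightarrow> posf (\<beta>, k) \<in> Omega1"
  using posf by blast

definition dec :: "(nat set \<Rightarrow> nat) \<Rightarrow> nat set \<Rightarrow> nat \<Rightarrow> nat" where
  "dec s \<beta> i = (LEAST v. s (posf (\<beta>, prod_encode (i, v))) = 1)"

definition Kf :: "nat set \<Rightarrow> (nat set \<Rightarrow> nat) \<Rightarrow> nat \<Rightarrow> nat" where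
  "Kf \<delta> s n = 7*n+8+(\<Sum>j<n. dec s (from_nat_into (underS omega1 \<delta>) j) 0)"

definition Lf :: "nat set \<Rightarrow> (nat set \<Rightarrow> nat) \<Rightarrow> nat \<Rightarrow> nat" where
  "Lf \<delta> s K = list_encode (map (\<lambda>i. dec s (from_nat_into (underS omega1 \<delta>) 0) (Suc i)) [0..<K])"

definition Fc :: "nat set \<Rightarrow> (nat set \<Rightarrow> nat) \<Rightarrow> nat \<Rightarrow> nat" where
  "Fc \<delta> s n = Lf \<delta> s (Kf \<delta> s n)"

section \<open>Measurability\<close>

lemma meas2:
  fixes f :: "'m \<Rightarrow> 'a::countable" and g :: "'m \<Rightarrow> 'b::countable"
  assumes "f \<in> M \<rightarrow>\<^sub>M count_space UNIV" "g \<in> M \<rightarrow>\<^sub>M count_space UNIV"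
  shows "(\<lambda>x. h (f x) (g x)) \<in> M \<rightarrow>\<^sub>M (count_space UNIV :: 'c measure)"
proof (rule measurable_compose_countable'[where g=f and I=UNIV and f="\<lambda>i x. h i (g x)"])
  fix i show "(\<lambda>x. h i (g x)) \<in> M \<rightarrow>\<^sub>M count_space UNIV"
    using measurable_compose[OF assms(2), of "h i" "count_space UNIV"] by simp
  show "f \<in> M \<rightarrow>\<^sub>M count_space UNIV" by fact
  show "countable (UNIV :: 'a set)" by (rule countableI_type)
qed

lemma dec_meas: "(\<lambda>s. dec s \<beta> i) \<in> restrict_space borel X \<rightarrow>\<^sub>M count_space UNIV"
  unfolding dec_def
proof (rule measurable_Least)
  fix v
  show "(\<lambda>s::nat set \<Rightarrow> nat. s (posf (\<beta>, prod_encode (i, v))) = 1) \<in> restrict_space borel X \<rightarrow>\<^sub>M count_space UNIV"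
    using measurable_compose[OF proj_meas, of "\<lambda>x::nat. x = 1" "count_space UNIV"] by simp
qed

lemma Kf_meas: "(\<lambda>s. Kf \<delta> s n) \<in> restrict_space borel X \<rightarrow>\<^sub>M count_space UNIV"
proof -
  have "(\<lambda>s. (\<Sum>j<m. dec s (from_nat_into (underS omega1 \<delta>) j) 0)) \<in> restrict_space borel X \<rightarrow>\<^sub>M count_space UNIV" for m
  proof (induction m)
    case 0 then show ?case by simp
  next
    case (Suc m)
    then show ?case using meas2[OF Suc dec_meas, where h="(+)"] by simp
  qed
  from meas2[OF this measurable_const[of "7*n+8"], where h="\<lambda>a b. b + a"]
  show ?thesis unfolding Kf_def by simp
qed

lemma Lf_meas: "(\<lambda>s. Lf \<delta> s K) \<in> restrict_space borel X \<rightarrow>\<^sub>M count_space UNIV"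
proof -
  have "(\<lambda>s. map (\<lambda>i. dec s (from_nat_into (underS omega1 \<delta>) 0) (Suc i)) [0..<m]) \<in> restrict_space borel X \<rightarrow>\<^sub>M count_space UNIV" for m
  proof (induction m)
    case 0 then show ?case by simp
  next
    case (Suc m)
    then show ?case using meas2[OF Suc dec_meas, where h="\<lambda>l v. l @ [v]"] by simp
  qed
  from measurable_compose[OF this, of list_encode "count_space UNIV"]
  show ?thesis unfolding Lf_def by simp
qed

lemma Fc_borel: "Borel_on_tree Fc"
  unfolding Borel_on_tree_def
proof
  fix \<delta> assume "\<delta> \<in> Omega1"
  show "Fc \<delta> \<in> borel_measurable (restrict_space borel (seqs2 \<delta>))"
  proof (rule coord_meas)
    fix n
    show "(\<lambda>s. Fc \<delta> s n) \<in> restrict_space borel (seqs2 \<delta>) \<rightarrow>\<^sub>M count_space UNIV"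
      unfolding Fc_def
      by (rule measurable_compose_countable'[where I=UNIV, OF Lf_meas Kf_meas]) simp
  qed
qed

section \<open>Coding\<close>

definition codef :: "(nat set \<Rightarrow> nat \<Rightarrow> nat) \<Rightarrow> nat set \<Rightarrow> nat" where
  "codef V \<gamma> = (if \<exists>\<beta>\<in>Omega1. \<exists>k. \<gamma> = posf (\<beta>, k) \<and> V \<beta> (fst (prod_decode k)) = snd (prod_decode k) then 1 else 0)"

lemma codef_pos: assumes "\<beta> \<in> Omega1"
  shows "codef V (posf (\<beta>, prod_encode (i, v))) = (if V \<beta> i = v then 1 else 0)"
proof -
  have "(\<exists>\<beta>'\<in>Omega1. \<exists>k. posf (\<beta>, prod_encode (i, v)) = posf (\<beta>', k) \<and> V \<beta>' (fst (prod_decode k)) = snd (prod_decode k))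
       \<longleftrightarrow> V \<beta> i = v"
  proof
    assume "\<exists>\<beta>'\<in>Omega1. \<exists>k. posf (\<beta>, prod_encode (i, v)) = posf (\<beta>', k) \<and> V \<beta>' (fst (prod_decode k)) = snd (prod_decode k)"
    then obtain \<beta>' k where b: "\<beta>' \<in> Omega1" "posf (\<beta>, prod_encode (i, v)) = posf (\<beta>', k)"
      "V \<beta>' (fst (prod_decode k)) = snd (prod_decode k)" by blast
    then have "(\<beta>, prod_encode (i, v)) = (\<beta>', k)"
      using posf assms unfolding inj_on_def by blast
    then show "V \<beta> i = v" using b by auto
  next
    assume "V \<beta> i = v"
    then show "\<exists>\<beta>'\<in>Omega1. \<exists>k. posf (\<beta>, prod_encode (i, v)) = posf (\<beta>', k) \<and> V \<beta>' (fst (prod_decode k)) = snd (prod_decode k)"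
      using assms by force
  qed
  then show ?thesis unfolding codef_def by simp
qed

lemma dec_codef:
  assumes "\<beta> \<in> Omega1" "\<And>k. posf (\<beta>, k) \<in> U"
  shows "dec (restrict (codef V) U) \<beta> i = V \<beta> i"
proof -
  have "restrict (codef V) U (posf (\<beta>, prod_encode (i, v))) = (if V \<beta> i = v then 1 else 0)" for v
    using assms codef_pos by simp
  then show ?thesis unfolding dec_def by (simp add: Least_equality)
qed

lemma codef_Pi: "codef V \<in> Omega1 \<rightarrow> {0::nat, 1}"
  unfolding codef_def by auto

section \<open>The club\<close>

definition Cl :: "nat set set" where
  "Cl = {\<delta> \<in> Omega1. underS omega1 \<delta> \<noteq> {} \<and> (\<forall>\<beta>. olt \<beta> \<delta> \<longrightarrow> (\<forall>k. olt (posf (\<beta>, k)) \<delta>))}"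

lemma nxt_ex: assumes "\<gamma> \<in> Omega1"
  shows "\<exists>\<eta>. \<eta> \<in> Omega1 \<and> olt \<gamma> \<eta> \<and> (\<forall>\<beta> k. (olt \<beta> \<gamma> \<or> \<beta> = \<gamma>) \<longrightarrow> olt (posf (\<beta>, k)) \<eta>)"
proof -
  let ?X = "insert \<gamma> (posf ` ((insert \<gamma> (underS omega1 \<gamma>)) \<times> UNIV))"
  have "countable ?X" using count_underS[OF assms] by auto
  moreover have "?X \<subseteq> Omega1"
    using assms posf_in olt_Field olt_underS by auto
  ultimately obtain \<eta> where "\<eta> \<in> Omega1" "\<forall>x\<in>?X. olt x \<eta>" using bounded by blast
  then show ?thesis using olt_underS by auto
qed

lemma club_Cl: "club Cl"
  unfolding club_def
proof (intro conjI ballI allI impI)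
  show "Cl \<subseteq> Omega1" unfolding Cl_def by auto
next
  fix \<alpha> assume \<alpha>: "\<alpha> \<in> Omega1"
  define nxt where "nxt = (\<lambda>\<gamma>. SOME \<eta>. \<eta> \<in> Omega1 \<and> olt \<gamma> \<eta> \<and> (\<forall>\<beta> k. (olt \<beta> \<gamma> \<or> \<beta> = \<gamma>) \<longrightarrow> olt (posf (\<beta>, k)) \<eta>))"
  have nxt: "\<gamma> \<in> Omega1 \<Longrightarrow> nxt \<gamma> \<in> Omega1 \<and> olt \<gamma> (nxt \<gamma>) \<and> (\<forall>\<beta> k. (olt \<beta> \<gamma> \<or> \<beta> = \<gamma>) \<longrightarrow> olt (posf (\<beta>, k)) (nxt \<gamma>))" for \<gamma>
    unfolding nxt_def using someI_ex[OF nxt_ex] by blast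
  define a where "a = (\<lambda>i. (nxt ^^ i) \<alpha>)"
  have aO: "a i \<in> Omega1" for i by (induction i) (auto simp: a_def \<alpha> nxt)
  have aS: "a (Suc i) = nxt (a i)" for i by (simp add: a_def)
  have aInc: "olt (a i) (a (Suc i))" for i using nxt[OF aO[of i]] aS by simp
  have "countable (range a)" by simp
  then obtain \<eta> where "\<eta> \<in> Omega1" "\<forall>x\<in>range a. olt x \<eta>" using bounded aO by blast
  then have "\<eta> \<in> {\<eta> \<in> Omega1. \<forall>i. olt (a i) \<eta>}" by auto
  from minimal[OF this] obtain \<delta> where \<delta>: "\<delta> \<in> {\<eta> \<in> Omega1. \<forall>i. olt (a i) \<eta>}"
    "\<forall>z\<in>{\<eta> \<in> Omega1. \<forall>i. olt (a i) \<eta>}. \<not> olt z \<delta>" by blast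
  have below: "\<exists>i. olt \<beta> (a i)" if "olt \<beta> \<delta>" for \<beta>
  proof (rule ccontr)
    assume "\<not> (\<exists>i. olt \<beta> (a i))"
    then have "olt (a i) \<beta>" for i
    proof -
      have "\<not> olt \<beta> (a (Suc i))" using \<open>\<not> (\<exists>i. olt \<beta> (a i))\<close> by blast
      then have "a (Suc i) = \<beta> \<or> olt (a (Suc i)) \<beta>" using olt_total aO olt_Field[OF that] by blast
      then show ?thesis using aInc[of i] olt_trans by metis
    qed
    then have "\<beta> \<in> {\<eta> \<in> Omega1. \<forall>i. olt (a i) \<eta>}" using olt_Field[OF that] by blast
    then show False using \<delta>(2) that by blast
  qed
  have "\<delta> \<in> Cl"
    unfolding Cl_def
  proof (intro CollectI conjI allI impI)
    show "\<delta> \<in> Omega1" using \<delta> by blast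
    show "underS omega1 \<delta> \<noteq> {}" using \<delta>(1) olt_underS by blast
    fix \<beta> k assume "olt \<beta> \<delta>"
    then obtain i where "olt \<beta> (a i)" using below by blast
    then have "olt (posf (\<beta>, k)) (a (Suc i))" using nxt[OF aO[of i]] aS by simp
    then show "olt (posf (\<beta>, k)) \<delta>" using \<delta>(1) olt_trans by blast
  qed
  moreover have "olt \<alpha> \<delta>" using \<delta>(1) by (metis (mono_tags, lifting) a_def funpow_0 mem_Collect_eq)
  ultimately show "\<exists>\<beta>\<in>Cl. olt \<alpha> \<beta>" by blast
next
  fix \<delta> assume d: "\<delta> \<in> Omega1" "(\<exists>\<alpha>. olt \<alpha> \<delta>) \<and> (\<forall>\<alpha>. olt \<alpha> \<delta> \<longrightarrow> (\<exists>\<beta>\<in>Cl. olt \<alpha> \<beta> \<and> olt \<beta> \<delta>))"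
  show "\<delta> \<in> Cl"
    unfolding Cl_def
  proof (intro CollectI conjI allI impI)
    show "\<delta> \<in> Omega1" by fact
    show "underS omega1 \<delta> \<noteq> {}" using d(2) olt_underS by blast
    fix \<beta> k assume "olt \<beta> \<delta>"
    then obtain \<eta> where "\<eta> \<in> Cl" "olt \<beta> \<eta>" "olt \<eta> \<delta>" using d(2) by blast
    then show "olt (posf (\<beta>, k)) \<delta>" unfolding Cl_def using olt_trans by blast
  qed
qed

lemma fin_bound: "finite S \<Longrightarrow> \<exists>N::nat. \<forall>x\<ge>N. x \<notin> S"
  by (metis finite_nat_set_iff_bounded_le not_less_eq_eq)

theorem mainTheorem15:
  assumes "Diamond_Baire_eqinf"
  shows "ap_eq_aleph1"
proof -
  obtain G :: "nat set \<Rightarrow> nat \<Rightarrow> nat" where G: "\<forall>f \<in> Omega1 \<rightarrow> {0::nat, 1}.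
      stationary {\<delta> \<in> Omega1. eq_inf (Fc \<delta> (restrict f (underS omega1 \<delta>))) (G \<delta>)}"
    using assms Fc_borel unfolding Diamond_Baire_eqinf_def by blast
  define A where "A = fam G ` Omega1"
  have adA: "ad_perms A" unfolding A_def by (rule fam_ad_perms)
  have madA: "mad_perms A"
    unfolding mad_perms_def
  proof (intro conjI allI impI adA notI)
    fix q assume q: "bij q \<and> q \<notin> A" and adq: "ad_perms (insert q A)"
    have finq: "\<beta> \<in> Omega1 \<Longrightarrow> finite {x. q x = fam G \<beta> x}" for \<beta>
    proof -
      assume "\<beta> \<in> Omega1"
      then have "fam G \<beta> \<in> A" "q \<noteq> fam G \<beta>" using q unfolding A_def by auto
      then show ?thesis using adq unfolding ad_perms_def by blast
    qed
    define a where "a = (\<lambda>\<beta>. LEAST N. \<forall>x\<ge>N. q x \<noteq> fam G \<beta> x)"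
    have aP: "\<beta> \<in> Omega1 \<Longrightarrow> x \<ge> a \<beta> \<Longrightarrow> q x \<noteq> fam G \<beta> x" for \<beta> x
    proof -
      assume b: "\<beta> \<in> Omega1" "x \<ge> a \<beta>"
      obtain N where "\<forall>x\<ge>N. x \<notin> {x. q x = fam G \<beta> x}" using fin_bound[OF finq[OF b(1)]] by blast
      then have "\<exists>N. \<forall>x\<ge>N. q x \<noteq> fam G \<beta> x" by blast
      from LeastI_ex[OF this] b show ?thesis unfolding a_def by blast
    qed
    define V where "V = (\<lambda>\<beta> i. case i of 0 \<Rightarrow> a \<beta> | Suc i' \<Rightarrow> q i')"
    define f where "f = codef V"
    have "stationary {\<delta> \<in> Omega1. eq_inf (Fc \<delta> (restrict f (underS omega1 \<delta>))) (G \<delta>)}"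
      using G codef_Pi unfolding f_def by blast
    then obtain \<delta> where d: "\<delta> \<in> Omega1" "eq_inf (Fc \<delta> (restrict f (underS omega1 \<delta>))) (G \<delta>)" "\<delta> \<in> Cl"
      using club_Cl unfolding stationary_def by blast
    define \<epsilon> where "\<epsilon> = from_nat_into (underS omega1 \<delta>)"
    have ne: "underS omega1 \<delta> \<noteq> {}" using d(3) unfolding Cl_def by blast
    have eps: "olt (\<epsilon> j) \<delta>" for j using from_nat_into[OF ne] olt_underS unfolding \<epsilon>_def by blast
    have epsO: "\<epsilon> j \<in> Omega1" for j using olt_Field[OF eps] by blast
    have posU: "posf (\<epsilon> j, k) \<in> underS omega1 \<delta>" for j k
      using d(3) eps olt_underS unfolding Cl_def by blast
    have decV: "dec (restrict f (underS omega1 \<delta>)) (\<epsilon> j) i = V (\<epsilon> j) i" for j i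
      unfolding f_def by (rule dec_codef[OF epsO posU])
    define M where "M = (\<lambda>n. \<Sum>j<n. a (\<epsilon> j))"
    have Fval: "Fc \<delta> (restrict f (underS omega1 \<delta>)) n = list_encode (map q [0..<7*n+8+M n])" for n
    proof -
      have "Kf \<delta> (restrict f (underS omega1 \<delta>)) n = 7*n+8+M n"
        unfolding Kf_def M_def using decV unfolding \<epsilon>_def V_def by simp
      moreover have "Lf \<delta> (restrict f (underS omega1 \<delta>)) K = list_encode (map q [0..<K])" for K
        unfolding Lf_def using decV unfolding \<epsilon>_def V_def by simp
      ultimately show ?thesis unfolding Fc_def by simp
    qed
    define e where "e = enum (fam G) \<delta>"
    have e_eq: "e j = fam G (\<epsilon> j)" for j unfolding e_def enum_def \<epsilon>_def using ne by simp
    have "{n. Fc \<delta> (restrict f (underS omega1 \<delta>)) n = G \<delta> n} \<subseteq>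
      {n. \<exists>K M. list_decode (G \<delta> n) = map q [0..<K] \<and> K \<ge> 7*n+8+M \<and>
                 (\<forall>j x. j < n \<longrightarrow> x \<ge> M \<longrightarrow> q x \<noteq> e j x)}"
    proof
      fix n assume "n \<in> {n. Fc \<delta> (restrict f (underS omega1 \<delta>)) n = G \<delta> n}"
      then have "G \<delta> n = list_encode (map q [0..<7*n+8+M n])" using Fval by simp
      then have gn: "list_decode (G \<delta> n) = map q [0..<7*n+8+M n]" by (simp add: list_encode_inverse)
      have "\<forall>j x. j < n \<longrightarrow> x \<ge> M n \<longrightarrow> q x \<noteq> e j x"
      proof (intro allI impI)
        fix j x assume jx: "j < n" "x \<ge> M n"
        have "a (\<epsilon> j) \<le> M n" unfolding M_def using jx(1) by (intro member_le_sum) auto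
        then show "q x \<noteq> e j x" using aP[OF epsO] jx(2) e_eq by simp
      qed
      then show "n \<in> {n. \<exists>K M. list_decode (G \<delta> n) = map q [0..<K] \<and> K \<ge> 7*n+8+M \<and>
                 (\<forall>j x. j < n \<longrightarrow> x \<ge> M \<longrightarrow> q x \<noteq> e j x)}"
        using gn by blast
    qed
    then have infN: "infinite {n. \<exists>K M. list_decode (G \<delta> n) = map q [0..<K] \<and> K \<ge> 7*n+8+M \<and>
                 (\<forall>j x. j < n \<longrightarrow> x \<ge> M \<longrightarrow> q x \<noteq> e j x)}"
      using d(2) unfolding eq_inf_def using finite_subset by blast
    have "infinite {x. bld e (G \<delta>) x = q x}"
      by (rule bld_meet[OF _ _ infN]) (use enum_bij q bij_is_inj in \<open>auto simp: e_def\<close>)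
    then have "infinite {x. q x = fam G \<delta> x}"
      using fam_eq[of G \<delta>] ad_sym unfolding e_def by metis
    then show False using finq[OF d(1)] by blast
  qed
  show ?thesis
    unfolding ap_eq_aleph1_def
    using madA fam_card[of G] mad_uncountable_card unfolding A_def by blast
qed


end
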